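(* Let $(X,b,m)$ be a weighted graph satisfying (C), (B), (M), and let $D\subseteq X$ be not $d_{\mathrm{comb}}$-relatively dense. Then there exists a sequence $(x_n)_{n\in\mathbb N}$ in $X$ such that for all $T>0$ and all $r\in[1,\infty]$, \[\lim_{n\to\infty}\|(S_{(\cdot)}\delta_{x_n})|_D\|_{L_r((0,T);\ell_2(D,m|_D))}=0,\] where $\delta_x=m(x)^{-1/2}\mathbf 1_{\{x\}}$.
   Context: Weighted graph $(X,b,m)$: $X$ countable, $m\colon X\to(0,\infty)$, $b$ symmetric non-negative with $b(x,x)=0$ and $\sum_yb(x,y)<\infty$. Paths are sequences $(x_0,\dots,x_k)$ with $b(x_j,x_{j+1})>0$. (C) connected; (B) $\sup_x\frac1{m(x)}\sum_yb(x,y)<\infty$; (M) $\sup_xm(x)<\infty$. Combinatorial metric $d_{\mathrm{comb}}(x,y)$: minimal number of steps of a path from $x$ to $y$ ($0$ if $x=y$). $D$ is $d_{\mathrm{comb}}$-relatively dense if $\inf\{R>0:\bigcup_{x\in D}\{y:d_{\mathrm{comb}}(x,y)\le R\}=X\}<\infty$. $H$ is the weighted Laplacian $Hf(x)=\frac1{m(x)}\sum_yb(x,y)(f(x)-f(y))$ on $\ell_2(X,m)$, $S_t=e^{-tH}$. *)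

theory Defs
  imports "HOL-Probability.Essential_Supremum" "HOL-Analysis.Analysis"
begin

text \<open>Weighted graph on a countable vertex type 'a (X = UNIV).\<close>
definition weighted_graph :: "('a::countable \<Rightarrow> 'a \<Rightarrow> real) \<Rightarrow> ('a \<Rightarrow> real) \<Rightarrow> bool" where
  "weighted_graph b m \<longleftrightarrow>
     (\<forall>x. m x > 0) \<and> (\<forall>x y. b x y = b y x) \<and> (\<forall>x y. b x y \<ge> 0) \<and>
     (\<forall>x. b x x = 0) \<and> (\<forall>x. (b x) summable_on UNIV)"

definition edge :: "('a \<Rightarrow> 'a \<Rightarrow> real) \<Rightarrow> 'a \<Rightarrow> 'a \<Rightarrow> bool" where
  "edge b x y \<longleftrightarrow> b x y > 0"

definition graph_connected :: "('a \<Rightarrow> 'a \<Rightarrow> real) \<Rightarrow> bool" where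
  "graph_connected b \<longleftrightarrow> (\<forall>x y. \<exists>k. (edge b ^^ k) x y)"

definition bounded_degree :: "('a \<Rightarrow> 'a \<Rightarrow> real) \<Rightarrow> ('a \<Rightarrow> real) \<Rightarrow> bool" where
  "bounded_degree b m \<longleftrightarrow> (\<exists>C. \<forall>x. (1 / m x) * (\<Sum>\<^sub>\<infinity>y. b x y) \<le> C)"

definition bounded_measure :: "('a \<Rightarrow> real) \<Rightarrow> bool" where
  "bounded_measure m \<longleftrightarrow> (\<exists>C. \<forall>x. m x \<le> C)"

definition d_comb :: "('a \<Rightarrow> 'a \<Rightarrow> real) \<Rightarrow> 'a \<Rightarrow> 'a \<Rightarrow> nat" where
  "d_comb b x y = (LEAST k. (edge b ^^ k) x y)"

definition rel_dense :: "('a \<Rightarrow> 'a \<Rightarrow> real) \<Rightarrow> 'a set \<Rightarrow> bool" where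
  "rel_dense b D \<longleftrightarrow> (\<exists>R::real. R > 0 \<and> (\<Union>x\<in>D. {y. real (d_comb b x y) \<le> R}) = UNIV)"

text \<open>Weighted Laplacian (bounded under (B)), its powers and the semigroup
  S_t = e^{-tH} given by the (norm-convergent, hence pointwise) exponential series.\<close>
definition laplacian :: "('a \<Rightarrow> 'a \<Rightarrow> real) \<Rightarrow> ('a \<Rightarrow> real) \<Rightarrow> ('a \<Rightarrow> real) \<Rightarrow> 'a \<Rightarrow> real" where
  "laplacian b m f x = (1 / m x) * (\<Sum>\<^sub>\<infinity>y. b x y * (f x - f y))"

definition semigroup :: "('a \<Rightarrow> 'a \<Rightarrow> real) \<Rightarrow> ('a \<Rightarrow> real) \<Rightarrow> real \<Rightarrow> ('a \<Rightarrow> real) \<Rightarrow> 'a \<Rightarrow> real" where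
  "semigroup b m t f y = (\<Sum>k. ((- t) ^ k / fact k) * ((laplacian b m ^^ k) f) y)"

definition delta :: "('a \<Rightarrow> real) \<Rightarrow> 'a \<Rightarrow> 'a \<Rightarrow> real" where
  "delta m x y = (if y = x then 1 / sqrt (m x) else 0)"

definition l2_norm_on :: "('a \<Rightarrow> real) \<Rightarrow> 'a set \<Rightarrow> ('a \<Rightarrow> real) \<Rightarrow> real" where
  "l2_norm_on m D f = sqrt (\<Sum>\<^sub>\<infinity>y\<in>D. m y * (f y)\<^sup>2)"

definition Lr_norm :: "ereal \<Rightarrow> real \<Rightarrow> (real \<Rightarrow> real) \<Rightarrow> ereal" where
  "Lr_norm r T g =
    (if r = \<infinity> then esssup (restrict_space lborel {0<..<T}) (\<lambda>t. ereal \<bar>g t\<bar>)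
     else (let I = (\<integral>\<^sup>+ t\<in>{0<..<T}. ennreal (\<bar>g t\<bar> powr real_of_ereal r) \<partial>lborel)
           in if I = \<infinity> then \<infinity> else ereal (enn2real I powr (1 / real_of_ereal r))))"

end

theory Submission
  imports Defs
begin

lemma wg_facts:
  assumes "weighted_graph b m"
  shows "m x > 0" "b x y = b y x" "b x y \<ge> 0" "b x summable_on UNIV"
  using assms unfolding weighted_graph_def by auto

lemma infsum_le_of_finite:
  fixes f :: "'a \<Rightarrow> real"
  assumes "\<And>x. x\<in>A \<Longrightarrow> f x \<ge> 0" "\<And>F. finite F \<Longrightarrow> F \<subseteq> A \<Longrightarrow> sum f F \<le> B"
  shows "f summable_on A" "infsum f A \<le> B"
proof -
  have "bdd_above (sum f ` {F. F\<subseteq>A \<and> finite F})"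
    using assms(2) by (auto intro!: bdd_aboveI)
  then show s: "f summable_on A" using nonneg_bdd_above_summable_on assms(1) by blast
  show "infsum f A \<le> B" using infsum_le_finite_sums[OF s] assms(2) by blast
qed

lemma infsum_finsum:
  fixes g :: "'b \<Rightarrow> 'a \<Rightarrow> real"
  assumes "finite F" "\<And>y. y \<in> F \<Longrightarrow> g y summable_on A"
  shows "(\<lambda>z. \<Sum>y\<in>F. g y z) summable_on A \<and> infsum (\<lambda>z. \<Sum>y\<in>F. g y z) A = (\<Sum>y\<in>F. infsum (g y) A)"
  using assms
proof (induction F rule: finite_induct)
  case empty
  then show ?case by simp
next
  case (insert a F)
  then have IH: "(\<lambda>z. \<Sum>y\<in>F. g y z) summable_on A" "infsum (\<lambda>z. \<Sum>y\<in>F. g y z) A = (\<Sum>y\<in>F. infsum (g y) A)"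
    by auto
  have ga: "g a summable_on A" using insert by auto
  show ?case using insert(1,2) IH summable_on_add[OF ga IH(1)] infsum_add[OF ga IH(1)] by simp
qed

lemma lap_summable:
  assumes wg: "weighted_graph b m" and S: "\<And>z. \<bar>f z\<bar> \<le> S"
  shows "(\<lambda>z. b y z * (f y - f z)) summable_on UNIV"
proof -
  have g: "(\<lambda>z. b y z * (2*S)) summable_on UNIV"
    using wg_facts(4)[OF wg] summable_on_cmult_left by blast
  have "norm (b y z * (f y - f z)) \<le> b y z * (2*S)" for z
  proof -
    have "\<bar>f y - f z\<bar> \<le> 2*S" using S[of y] S[of z] by linarith
    then show ?thesis using wg_facts(3)[OF wg, of y z]
      by (simp add: abs_mult mult_left_mono)
  qed
  then have "(\<lambda>z. norm (b y z * (f y - f z))) summable_on UNIV"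
    by (rule Infinite_Sum.abs_summable_on_comparison_test'[OF g])
  then show ?thesis by (rule Infinite_Sum.abs_summable_summable)
qed

lemma bf_summable:
  assumes wg: "weighted_graph b m" and S: "\<And>z. \<bar>f z\<bar> \<le> S"
  shows "(\<lambda>z. b y z * \<bar>f z\<bar>) summable_on UNIV"
proof -
  have g: "(\<lambda>z. b y z * S) summable_on UNIV"
    using wg_facts(4)[OF wg] summable_on_cmult_left by blast
  show ?thesis
  proof (rule summable_on_comparison_test[OF g])
    fix z
    show "b y z * \<bar>f z\<bar> \<le> b y z * S" using wg_facts(3)[OF wg, of y z] S[of z] by (rule mult_left_mono[rotated])
    show "0 \<le> b y z * \<bar>f z\<bar>" using wg_facts(3)[OF wg, of y z] by simp
  qed
qed

lemma lap_pointwise: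
  assumes wg: "weighted_graph b m" and S: "\<And>z. \<bar>f z\<bar> \<le> S"
  shows "m y * \<bar>laplacian b m f y\<bar> \<le> infsum (b y) UNIV * \<bar>f y\<bar> + infsum (\<lambda>z. b y z * \<bar>f z\<bar>) UNIV"
proof -
  let ?g = "\<lambda>z. b y z * (f y - f z)"
  have sg: "?g summable_on UNIV" by (rule lap_summable[OF wg S])
  have sn: "(\<lambda>z. norm (?g z)) summable_on UNIV"
    using summable_on_iff_abs_summable_on_real[THEN iffD1, OF sg] by simp
  have s1: "(\<lambda>z. b y z * \<bar>f y\<bar>) summable_on UNIV"
    using wg_facts(4)[OF wg] summable_on_cmult_left by blast
  have s2: "(\<lambda>z. b y z * \<bar>f z\<bar>) summable_on UNIV" by (rule bf_summable[OF wg S])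
  have my: "m y > 0" using wg_facts(1)[OF wg] .
  have "m y * \<bar>laplacian b m f y\<bar> = \<bar>infsum ?g UNIV\<bar>"
    using my by (simp add: laplacian_def abs_mult)
  also have "\<dots> \<le> infsum (\<lambda>z. norm (?g z)) UNIV"
    using Infinite_Sum.norm_infsum_bound[OF sn] by simp
  also have "\<dots> \<le> infsum (\<lambda>z. b y z * \<bar>f y\<bar> + b y z * \<bar>f z\<bar>) UNIV"
  proof (rule infsum_mono[OF sn summable_on_add[OF s1 s2]])
    fix z
    have "\<bar>f y - f z\<bar> \<le> \<bar>f y\<bar> + \<bar>f z\<bar>" by linarith
    then have "b y z * \<bar>f y - f z\<bar> \<le> b y z * (\<bar>f y\<bar> + \<bar>f z\<bar>)"
      using wg_facts(3)[OF wg, of y z] by (rule mult_left_mono)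
    then show "norm (?g z) \<le> b y z * \<bar>f y\<bar> + b y z * \<bar>f z\<bar>"
      using wg_facts(3)[OF wg, of y z] by (simp add: abs_mult distrib_left)
  qed
  also have "\<dots> = infsum (b y) UNIV * \<bar>f y\<bar> + infsum (\<lambda>z. b y z * \<bar>f z\<bar>) UNIV"
    using infsum_add[OF s1 s2] infsum_cmult_left[of "\<bar>f y\<bar>" "b y" UNIV] wg_facts(4)[OF wg]
    by simp
  finally show ?thesis .
qed

lemma lap_step:
  assumes wg: "weighted_graph b m" and C: "C \<ge> 0" and deg: "\<And>x. infsum (b x) UNIV \<le> C * m x"
    and S: "\<And>z. \<bar>f z\<bar> \<le> S"
    and B: "\<And>F. finite F \<Longrightarrow> (\<Sum>y\<in>F. m y * \<bar>f y\<bar>) \<le> B"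
  shows "\<bar>laplacian b m f y\<bar> \<le> 2*C*S"
    and "finite F \<Longrightarrow> (\<Sum>y\<in>F. m y * \<bar>laplacian b m f y\<bar>) \<le> 2*C*B"
proof -
  have S0: "S \<ge> 0" using S[of y] by linarith
  have my: "m y > 0" using wg_facts(1)[OF wg] .
  have d0: "infsum (b x) UNIV \<ge> 0" for x using wg_facts(3)[OF wg] by (simp add: infsum_nonneg)
  have "infsum (\<lambda>z. b y z * \<bar>f z\<bar>) UNIV \<le> infsum (\<lambda>z. b y z * S) UNIV"
  proof (rule infsum_mono[OF bf_summable[OF wg S]])
    show "(\<lambda>z. b y z * S) summable_on UNIV" using wg_facts(4)[OF wg] by (rule summable_on_cmult_left)
    fix z show "b y z * \<bar>f z\<bar> \<le> b y z * S" using wg_facts(3)[OF wg, of y z] S[of z] by (rule mult_left_mono[rotated])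
  qed
  also have "\<dots> = infsum (b y) UNIV * S"
    using infsum_cmult_left[of S "b y" UNIV] wg_facts(4)[OF wg] by simp
  finally have "m y * \<bar>laplacian b m f y\<bar> \<le> infsum (b y) UNIV * S + infsum (b y) UNIV * S"
    using lap_pointwise[where f=f and S=S and y=y, OF wg S] mult_left_mono[OF S[of y] d0[of y]] by linarith
  also have "\<dots> \<le> m y * (2*C*S)" using mult_right_mono[OF deg[of y] S0] by (simp add: algebra_simps)
  finally show "\<bar>laplacian b m f y\<bar> \<le> 2*C*S" using my by simp
next
  assume F: "finite F"
  have sF: "(\<lambda>z. \<Sum>y\<in>F. b y z * \<bar>f z\<bar>) summable_on UNIV \<and>
      infsum (\<lambda>z. \<Sum>y\<in>F. b y z * \<bar>f z\<bar>) UNIV = (\<Sum>y\<in>F. infsum (\<lambda>z. b y z * \<bar>f z\<bar>) UNIV)"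
    by (rule infsum_finsum[OF F]) (rule bf_summable[OF wg S])
  have "(\<Sum>y\<in>F. m y * \<bar>laplacian b m f y\<bar>) \<le>
      (\<Sum>y\<in>F. infsum (b y) UNIV * \<bar>f y\<bar> + infsum (\<lambda>z. b y z * \<bar>f z\<bar>) UNIV)"
    by (rule sum_mono) (rule lap_pointwise[OF wg S])
  also have "\<dots> = (\<Sum>y\<in>F. infsum (b y) UNIV * \<bar>f y\<bar>) + infsum (\<lambda>z. \<Sum>y\<in>F. b y z * \<bar>f z\<bar>) UNIV"
    using sF by (simp add: sum.distrib)
  also have "\<dots> \<le> C * B + C * B"
  proof (rule add_mono)
    have "(\<Sum>y\<in>F. infsum (b y) UNIV * \<bar>f y\<bar>) \<le> (\<Sum>y\<in>F. C * (m y * \<bar>f y\<bar>))"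
      proof (rule sum_mono)
      fix y show "infsum (b y) UNIV * \<bar>f y\<bar> \<le> C * (m y * \<bar>f y\<bar>)"
        using mult_right_mono[OF deg[of y], of "\<bar>f y\<bar>"] by (simp add: mult.assoc)
    qed
    also have "\<dots> = C * (\<Sum>y\<in>F. m y * \<bar>f y\<bar>)" by (rule sum_distrib_left[symmetric])
    also have "\<dots> \<le> C * B" using B[OF F] C by (rule mult_left_mono)
    finally show "(\<Sum>y\<in>F. infsum (b y) UNIV * \<bar>f y\<bar>) \<le> C * B" .
    show "infsum (\<lambda>z. \<Sum>y\<in>F. b y z * \<bar>f z\<bar>) UNIV \<le> C * B"
    proof (rule infsum_le_of_finite(2))
      fix z show "0 \<le> (\<Sum>y\<in>F. b y z * \<bar>f z\<bar>)" using wg_facts(3)[OF wg] by (simp add: sum_nonneg)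
    next
      fix G :: "'a set" assume G: "finite G" "G \<subseteq> UNIV"
      have "(\<Sum>z\<in>G. \<Sum>y\<in>F. b y z * \<bar>f z\<bar>) = (\<Sum>z\<in>G. (\<Sum>y\<in>F. b z y) * \<bar>f z\<bar>)"
        unfolding sum_distrib_right by (rule sum.cong[OF refl], rule sum.cong[OF refl]) (simp add: wg_facts(2)[OF wg])
      also have "\<dots> \<le> (\<Sum>z\<in>G. C * (m z * \<bar>f z\<bar>))"
      proof (rule sum_mono)
        fix z
        have "(\<Sum>y\<in>F. b z y) \<le> infsum (b z) UNIV"
          using finite_sum_le_infsum[OF wg_facts(4)[OF wg] F, of z] wg_facts(3)[OF wg] by simp
        also have "\<dots> \<le> C * m z" by (rule deg)
        finally have "(\<Sum>y\<in>F. b z y) * \<bar>f z\<bar> \<le> (C * m z) * \<bar>f z\<bar>"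
          by (rule mult_right_mono) simp
        then show "(\<Sum>y\<in>F. b z y) * \<bar>f z\<bar> \<le> C * (m z * \<bar>f z\<bar>)"
          by (simp add: mult.assoc)
      qed
      also have "\<dots> = C * (\<Sum>z\<in>G. m z * \<bar>f z\<bar>)" by (rule sum_distrib_left[symmetric])
      also have "\<dots> \<le> C * B" using B[OF G(1)] C by (rule mult_left_mono)
      finally show "(\<Sum>z\<in>G. \<Sum>y\<in>F. b y z * \<bar>f z\<bar>) \<le> C * B" .
    qed
  qed
  finally show "(\<Sum>y\<in>F. m y * \<bar>laplacian b m f y\<bar>) \<le> 2*C*B" by (simp add: algebra_simps)
qed

lemma iter_bounds:
  assumes wg: "weighted_graph b m" and C: "C \<ge> 0" and deg: "\<And>x. infsum (b x) UNIV \<le> C * m x"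
  shows "(\<forall>y. \<bar>(laplacian b m ^^ k) (delta m x) y\<bar> \<le> (2*C)^k / sqrt (m x)) \<and>
         (\<forall>F. finite F \<longrightarrow> (\<Sum>y\<in>F. m y * \<bar>(laplacian b m ^^ k) (delta m x) y\<bar>) \<le> (2*C)^k * sqrt (m x))"
proof (induction k)
  case 0
  have mx: "m x > 0" using wg_facts(1)[OF wg] .
  have "\<bar>delta m x y\<bar> \<le> 1 / sqrt (m x)" for y using mx by (simp add: delta_def)
  moreover have "(\<Sum>y\<in>F. m y * \<bar>delta m x y\<bar>) \<le> sqrt (m x)" if F: "finite F" for F
  proof -
    have "(\<Sum>y\<in>F. m y * \<bar>delta m x y\<bar>) = (\<Sum>y\<in>F. if y = x then m x / sqrt (m x) else 0)"
      by (rule sum.cong) (use mx in \<open>auto simp: delta_def\<close>)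
    also have "\<dots> = (if x \<in> F then m x / sqrt (m x) else 0)" using F by (simp add: sum.delta)
    also have "\<dots> \<le> sqrt (m x)" using mx by (simp add: real_div_sqrt)
    finally show ?thesis .
  qed
  ultimately show ?case by simp
next
  case (Suc k)
  let ?f = "(laplacian b m ^^ k) (delta m x)"
  have S: "\<And>z. \<bar>?f z\<bar> \<le> (2*C)^k / sqrt (m x)" using Suc by blast
  have B: "\<And>F. finite F \<Longrightarrow> (\<Sum>y\<in>F. m y * \<bar>?f y\<bar>) \<le> (2*C)^k * sqrt (m x)" using Suc by blast
  have "\<bar>laplacian b m ?f y\<bar> \<le> (2*C)^Suc k / sqrt (m x)" for y
    using lap_step(1)[OF wg C deg S B, of y] by (simp add: mult.assoc)
  moreover have "(\<Sum>y\<in>F. m y * \<bar>laplacian b m ?f y\<bar>) \<le> (2*C)^Suc k * sqrt (m x)" if "finite F" for F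
    using lap_step(2)[OF wg C deg S B that] by (simp add: mult.assoc)
  ultimately show ?case by simp
qed

lemma locality:
  assumes wg: "weighted_graph b m"
  shows "(laplacian b m ^^ k) (delta m x) y \<noteq> 0 \<Longrightarrow> \<exists>j\<le>k. (edge b ^^ j) y x"
proof (induction k arbitrary: y)
  case 0
  then have "y = x" by (auto simp: delta_def split: if_splits)
  then show ?case by auto
next
  case (Suc k)
  let ?f = "(laplacian b m ^^ k) (delta m x)"
  have ne: "laplacian b m ?f y \<noteq> 0" using Suc.prems by simp
  show ?case
  proof (cases "?f y = 0 \<and> (\<forall>z. b y z > 0 \<longrightarrow> ?f z = 0)")
    case True
    have "b y z * (?f y - ?f z) = 0" for z
    proof (cases "b y z > 0")
      case True
      then show ?thesis using \<open>?f y = 0 \<and> (\<forall>z. b y z > 0 \<longrightarrow> ?f z = 0)\<close> by simp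
    next
      case False
      then have "b y z = 0" using wg_facts(3)[OF wg, of y z] by linarith
      then show ?thesis by simp
    qed
    then have "infsum (\<lambda>z. b y z * (?f y - ?f z)) UNIV = 0" by (intro infsum_0) 
    then have "laplacian b m ?f y = 0" unfolding laplacian_def by simp
    with ne show ?thesis by simp
  next
    case False
    then consider "?f y \<noteq> 0" | z where "b y z > 0" "?f z \<noteq> 0" by blast
    then show ?thesis
    proof cases
      case 1
      then obtain j where "j \<le> k" "(edge b ^^ j) y x" using Suc.IH by blast
      then show ?thesis by (intro exI[of _ j]) auto
    next
      case 2
      then obtain j where j: "j \<le> k" "(edge b ^^ j) z x" using Suc.IH by blast
      have "edge b y z" using 2 by (simp add: edge_def)
      then have "(edge b ^^ Suc j) y x" using j(2) by (rule relpowp_Suc_I2)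
      then show ?thesis using j(1) by (intro exI[of _ "Suc j"]) auto
    qed
  qed
qed

lemma sg_bounds:
  assumes wg: "weighted_graph b m" and C: "C \<ge> 0" and deg: "\<And>x. infsum (b x) UNIV \<le> C * m x"
    and t: "\<bar>t\<bar> \<le> T"
    and van: "\<And>y k. y \<in> A \<Longrightarrow> \<not> Q k \<Longrightarrow> (laplacian b m ^^ k) (delta m x) y = 0"
  defines "w \<equiv> \<lambda>k. if Q k then (2*C*T)^k / fact k else 0"
  shows "summable w" "suminf w \<ge> 0"
    and "y \<in> A \<Longrightarrow> \<bar>semigroup b m t (delta m x) y\<bar> \<le> suminf w / sqrt (m x)"
    and "finite F \<Longrightarrow> F \<subseteq> A \<Longrightarrow> (\<Sum>y\<in>F. m y * \<bar>semigroup b m t (delta m x) y\<bar>) \<le> suminf w * sqrt (m x)"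
    and "finite F \<Longrightarrow> F \<subseteq> A \<Longrightarrow> (\<Sum>y\<in>F. m y * (semigroup b m t (delta m x) y)^2) \<le> (suminf w)^2"
proof -
  define h where "h k y = (laplacian b m ^^ k) (delta m x) y" for k y
  define c where "c k = (if Q k then T^k / fact k else 0)" for k
  have T0: "T \<ge> 0" using t by linarith
  have mx: "m x > 0" using wg_facts(1)[OF wg] .
  have sx: "sqrt (m x) > 0" using mx by simp
  have c0: "c k \<ge> 0" for k using T0 by (simp add: c_def)
  have w0: "w k \<ge> 0" for k using T0 C by (simp add: w_def)
  have hb: "\<bar>h k y\<bar> \<le> (2*C)^k / sqrt (m x)" for k y
    using iter_bounds[OF wg C deg, of k x] by (simp add: h_def)
  have hB: "finite F \<Longrightarrow> (\<Sum>y\<in>F. m y * \<bar>h k y\<bar>) \<le> (2*C)^k * sqrt (m x)" for k F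
    using iter_bounds[OF wg C deg, of k x] by (simp add: h_def)
  have "summable (\<lambda>k. (2*C*T)^k / fact k)"
    using summable_exp[of "2*C*T"] by (simp add: divide_inverse mult.commute)
  then show sw: "summable w"
    by (rule summable_comparison_test'[where N=0]) (use C T0 in \<open>auto simp: w_def\<close>)
  show "suminf w \<ge> 0" using sw w0 by (simp add: suminf_nonneg)
  have ch: "c k * \<bar>h k y\<bar> \<le> w k / sqrt (m x)" for k y
  proof (cases "Q k")
    case True
    have "c k * \<bar>h k y\<bar> \<le> c k * ((2*C)^k / sqrt (m x))" using hb c0 by (rule mult_left_mono)
    also have "\<dots> = w k / sqrt (m x)" using True by (simp add: c_def w_def power_mult_distrib)
    finally show ?thesis .
  qed (simp add: c_def w_def)
  have sch: "summable (\<lambda>k. c k * \<bar>h k y\<bar>)" for y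
    by (rule summable_comparison_test[OF _ summable_divide[OF sw, of "sqrt (m x)"]])
       (use ch c0 in \<open>auto simp: abs_mult\<close>)
  have tb: "\<bar>(-t)^k / fact k * h k y\<bar> \<le> c k * \<bar>h k y\<bar>" if y: "y \<in> A" for k y
  proof (cases "Q k")
    case True
    have "\<bar>(-t)^k / fact k\<bar> = \<bar>t\<bar>^k / fact k" by (simp add: power_abs)
    also have "\<dots> \<le> T^k / fact k" using t by (simp add: divide_right_mono power_mono)
    finally have "\<bar>(-t)^k / fact k\<bar> * \<bar>h k y\<bar> \<le> T^k / fact k * \<bar>h k y\<bar>" by (rule mult_right_mono) simp
    then show ?thesis by (simp only: abs_mult[of "(-t)^k / fact k"] c_def if_P[OF True])
  next
    case False
    then show ?thesis using van[OF y False] by (simp add: h_def)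
  qed
  have g1: "\<bar>semigroup b m t (delta m x) y\<bar> \<le> suminf (\<lambda>k. c k * \<bar>h k y\<bar>)" if y: "y \<in> A" for y
  proof -
    have sa: "summable (\<lambda>k. \<bar>(-t)^k / fact k * h k y\<bar>)"
      by (rule summable_comparison_test[OF _ sch[of y]]) (use tb[OF y] in auto)
    have "\<bar>semigroup b m t (delta m x) y\<bar> = \<bar>suminf (\<lambda>k. (-t)^k / fact k * h k y)\<bar>"
      by (simp add: semigroup_def h_def)
    also have "\<dots> \<le> suminf (\<lambda>k. \<bar>(-t)^k / fact k * h k y\<bar>)" using sa by (rule summable_rabs)
    also have "\<dots> \<le> suminf (\<lambda>k. c k * \<bar>h k y\<bar>)"
      by (rule suminf_le[OF _ sa sch]) (use tb[OF y] in auto)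
    finally show ?thesis .
  qed
  show g2: "\<bar>semigroup b m t (delta m x) y\<bar> \<le> suminf w / sqrt (m x)" if y: "y \<in> A" for y
  proof -
    have "suminf (\<lambda>k. c k * \<bar>h k y\<bar>) \<le> suminf (\<lambda>k. w k / sqrt (m x))"
      by (rule suminf_le[OF _ sch summable_divide[OF sw]]) (use ch in auto)
    also have "\<dots> = suminf w / sqrt (m x)" using sw by (rule suminf_divide)
    finally show ?thesis using g1[OF y] by linarith
  qed
  show g3: "(\<Sum>y\<in>F. m y * \<bar>semigroup b m t (delta m x) y\<bar>) \<le> suminf w * sqrt (m x)"
    if F: "finite F" "F \<subseteq> A" for F
  proof -
    have my: "\<And>y. m y > 0" using wg_facts(1)[OF wg] .
    have "(\<Sum>y\<in>F. m y * \<bar>semigroup b m t (delta m x) y\<bar>) \<le> (\<Sum>y\<in>F. m y * suminf (\<lambda>k. c k * \<bar>h k y\<bar>))"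
      by (rule sum_mono, rule mult_left_mono) (use g1 F my[THEN less_imp_le] in auto)
    also have "\<dots> = (\<Sum>y\<in>F. suminf (\<lambda>k. m y * (c k * \<bar>h k y\<bar>)))"
      by (rule sum.cong[OF refl]) (rule suminf_mult[OF sch, symmetric])
    also have "\<dots> = suminf (\<lambda>k. \<Sum>y\<in>F. m y * (c k * \<bar>h k y\<bar>))"
      by (rule suminf_sum[symmetric]) (rule summable_mult[OF sch])
    also have "\<dots> \<le> suminf (\<lambda>k. w k * sqrt (m x))"
    proof (rule suminf_le)
      fix k
      have "(\<Sum>y\<in>F. m y * (c k * \<bar>h k y\<bar>)) = c k * (\<Sum>y\<in>F. m y * \<bar>h k y\<bar>)"
        by (simp add: sum_distrib_left algebra_simps)
      also have "\<dots> \<le> c k * ((2*C)^k * sqrt (m x))" using hB[OF F(1)] c0 by (rule mult_left_mono)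
      also have "\<dots> = w k * sqrt (m x)" by (simp add: c_def w_def power_mult_distrib)
      finally show "(\<Sum>y\<in>F. m y * (c k * \<bar>h k y\<bar>)) \<le> w k * sqrt (m x)" .
    next
      show "summable (\<lambda>k. \<Sum>y\<in>F. m y * (c k * \<bar>h k y\<bar>))"
        by (rule summable_sum) (rule summable_mult[OF sch])
      show "summable (\<lambda>k. w k * sqrt (m x))" using sw by (rule summable_mult2)
    qed
    also have "\<dots> = suminf w * sqrt (m x)" using sw by (rule suminf_mult2[symmetric])
    finally show ?thesis .
  qed
  show "(\<Sum>y\<in>F. m y * (semigroup b m t (delta m x) y)^2) \<le> (suminf w)^2"
    if F: "finite F" "F \<subseteq> A" for F
  proof -
    have my: "\<And>y. m y > 0" using wg_facts(1)[OF wg] .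
    have "(\<Sum>y\<in>F. m y * (semigroup b m t (delta m x) y)^2) \<le>
          (\<Sum>y\<in>F. m y * \<bar>semigroup b m t (delta m x) y\<bar> * (suminf w / sqrt (m x)))"
    proof (rule sum_mono)
      fix y assume "y \<in> F"
      then have y: "y \<in> A" using F by auto
      have "(semigroup b m t (delta m x) y)^2 = \<bar>semigroup b m t (delta m x) y\<bar> * \<bar>semigroup b m t (delta m x) y\<bar>"
        by (simp add: power2_eq_square abs_mult[symmetric])
      also have "\<dots> \<le> \<bar>semigroup b m t (delta m x) y\<bar> * (suminf w / sqrt (m x))"
        using g2[OF y] by (rule mult_left_mono) simp
      finally show "m y * (semigroup b m t (delta m x) y)^2 \<le> m y * \<bar>semigroup b m t (delta m x) y\<bar> * (suminf w / sqrt (m x))"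
        using mult_left_mono[OF _ less_imp_le[OF my[of y]]] by (simp only: mult.assoc)
    qed
    also have "\<dots> = (\<Sum>y\<in>F. m y * \<bar>semigroup b m t (delta m x) y\<bar>) * (suminf w / sqrt (m x))"
      by (rule sum_distrib_right[symmetric])
    also have "\<dots> \<le> (suminf w * sqrt (m x)) * (suminf w / sqrt (m x))"
      by (rule mult_right_mono[OF g3[OF F]]) (use sw w0 sx in \<open>simp add: suminf_nonneg\<close>)
    also have "\<dots> = (suminf w)^2" using sx by (simp add: power2_eq_square)
    finally show ?thesis .
  qed
qed

lemma measurable_infsum_countable:
  fixes f :: "real \<Rightarrow> 'a::countable \<Rightarrow> real"
  assumes meas: "\<And>y. (\<lambda>t. f t y) \<in> borel_measurable lborel" and summ: "\<And>t. f t summable_on D"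
  shows "(\<lambda>t. infsum (f t) D) \<in> borel_measurable lborel"
proof (cases "finite D")
  case True
  then show ?thesis using meas by simp
next
  case False
  define e where "e = from_nat_into D"
  have bij: "bij_betw e UNIV D" using bij_betw_from_nat_into[OF countableI_type False] e_def by simp
  have eq: "infsum (f t) D = suminf (\<lambda>i. f t (e i))" for t
  proof -
    have 1: "infsum (f t) D = infsum (\<lambda>i. f t (e i)) UNIV" using infsum_reindex_bij_betw[OF bij, of "f t"] by simp
    have "(\<lambda>i. f t (e i)) summable_on UNIV" using summable_on_reindex_bij_betw[OF bij] summ by blast
    then have "(\<lambda>i. f t (e i)) sums infsum (\<lambda>i. f t (e i)) UNIV" by (intro has_sum_imp_sums has_sum_infsum)
    then show ?thesis using 1 sums_unique by metis
  qed
  show ?thesis unfolding eq by (rule borel_measurable_suminf) (rule meas)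
qed

lemma semigroup_measurable[measurable]:
  "(\<lambda>t. semigroup b m t f y) \<in> borel_measurable lborel"
  unfolding semigroup_def by measurable

lemma tail_tendsto:
  fixes a :: "nat \<Rightarrow> real"
  assumes "summable a"
  shows "(\<lambda>n. suminf (\<lambda>k. if n < k then a k else 0)) \<longlonglongrightarrow> 0"
proof -
  have eq: "suminf (\<lambda>k. if n < k then a k else 0) = suminf a - (\<Sum>k\<le>n. a k)" for n
  proof -
    have fin: "summable (\<lambda>k. if k \<le> n then a k else 0)" by (rule summable_finite[of "{..n}"]) auto
    have s2: "suminf (\<lambda>k. if k \<le> n then a k else 0) = (\<Sum>k\<le>n. a k)"
      by (subst suminf_finite[of "{..n}"]) auto
    have "suminf a - suminf (\<lambda>k. if k \<le> n then a k else 0) = (\<Sum>k. a k - (if k \<le> n then a k else 0))"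
      by (rule suminf_diff[OF assms fin])
    also have "(\<lambda>k. a k - (if k \<le> n then a k else 0)) = (\<lambda>k. if n < k then a k else 0)" by auto
    finally show ?thesis using s2 by simp
  qed
  have "(\<lambda>n. suminf a - (\<Sum>k\<le>n. a k)) \<longlonglongrightarrow> suminf a - suminf a"
    by (intro tendsto_diff tendsto_const summable_LIMSEQ'[OF assms])
  then show ?thesis unfolding eq by simp
qed

lemma Lr_bound:
  assumes T: "T > 0" and r: "1 \<le> r" and g0: "\<And>t. g t \<ge> 0" and gE: "\<And>t. t \<in> {0<..<T} \<Longrightarrow> g t \<le> E"
    and E0: "E \<ge> 0"
    and meas: "(\<lambda>t. ereal \<bar>g t\<bar>) \<in> borel_measurable (restrict_space lborel {0<..<T})"
  shows "0 \<le> Lr_norm r T g \<and> Lr_norm r T g \<le> ereal (E * (1 + T))"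
proof (cases "r = \<infinity>")
  case True
  let ?M = "restrict_space lborel {0<..<T}"
  have sp: "space ?M = {0<..<T}" by (simp add: space_restrict_space)
  have em: "emeasure ?M (space ?M) \<noteq> 0"
    using T by (simp add: sp emeasure_restrict_space)
  have "esssup ?M (\<lambda>t. ereal \<bar>g t\<bar>) \<le> ereal E"
    by (rule esssup_I[OF meas], rule AE_I2) (use gE g0 sp in auto)
  also have "\<dots> \<le> ereal (E * (1 + T))" using mult_left_mono[of 1 "1+T" E] E0 T by simp
  finally have up: "esssup ?M (\<lambda>t. ereal \<bar>g t\<bar>) \<le> ereal (E * (1 + T))" .
  have "0 = esssup ?M (\<lambda>t. 0::ereal)" using esssup_const[OF em] by simp
  also have "\<dots> \<le> esssup ?M (\<lambda>t. ereal \<bar>g t\<bar>)" by (rule esssup_mono) auto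
  finally show ?thesis using up True by (simp add: Lr_norm_def)
next
  case False
  then obtain p where rp: "r = ereal p" using r by (cases r) auto
  have p1: "p \<ge> 1" using r rp by simp
  let ?I = "\<integral>\<^sup>+ t\<in>{0<..<T}. ennreal (\<bar>g t\<bar> powr p) \<partial>lborel"
  have "?I \<le> (\<integral>\<^sup>+ t. ennreal (E powr p) * indicator {0<..<T} t \<partial>lborel)"
  proof (rule nn_integral_mono)
    fix t
    show "ennreal (\<bar>g t\<bar> powr p) * indicator {0<..<T} t \<le> ennreal (E powr p) * indicator {0<..<T} t"
    proof (cases "t \<in> {0<..<T}")
      case True
      have "\<bar>g t\<bar> powr p \<le> E powr p" using gE[OF True] g0[of t] p1 by (intro powr_mono2) auto
      then show ?thesis using True by (simp add: ennreal_leI)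
    qed simp
  qed
  also have "\<dots> = ennreal (E powr p) * ennreal T" using T by (simp add: nn_integral_cmult_indicator)
  also have "\<dots> = ennreal (E powr p * T)" using T by (simp add: ennreal_mult)
  finally have Ile: "?I \<le> ennreal (E powr p * T)" .
  then have Inf: "?I \<noteq> \<infinity>" by (metis ennreal_neq_top infinity_ennreal_def neq_top_trans)
  have "enn2real ?I \<le> enn2real (ennreal (E powr p * T))" by (rule enn2real_mono[OF Ile]) simp
  also have "\<dots> = E powr p * T" using T by simp
  finally have eI: "enn2real ?I \<le> E powr p * T" .
  have "enn2real ?I powr (1/p) \<le> (E powr p * T) powr (1/p)"
    by (rule powr_mono2) (use p1 eI in auto)
  also have "\<dots> = E * T powr (1/p)"
    using p1 E0 by (simp add: powr_mult powr_powr powr_one)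
  also have "\<dots> \<le> E * (1 + T)"
  proof (rule mult_left_mono[OF _ E0])
    have "T powr (1/p) \<le> (1 + T) powr (1/p)" using T p1 by (intro powr_mono2) auto
    also have "\<dots> \<le> (1 + T) powr 1" using T p1 by (intro powr_mono) auto
    finally show "T powr (1/p) \<le> 1 + T" using T by simp
  qed
  finally have up: "enn2real ?I powr (1/p) \<le> E * (1 + T)" .
  show ?thesis using up Inf False rp by (simp add: Lr_norm_def Let_def)
qed

theorem mainTheorem10:
  fixes b :: "'a::countable \<Rightarrow> 'a \<Rightarrow> real" and m :: "'a \<Rightarrow> real" and D :: "'a set"
  assumes "weighted_graph b m"
    and "graph_connected b"
    and "bounded_degree b m"
    and "bounded_measure m"
    and "\<not> rel_dense b D"
  shows "\<exists>xs :: nat \<Rightarrow> 'a. \<forall>T::real. T > 0 \<longrightarrow> (\<forall>r::ereal. 1 \<le> r \<longrightarrow>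
           ((\<lambda>n. Lr_norm r T (\<lambda>t. l2_norm_on m D (semigroup b m t (delta m (xs n)))))
              \<longlonglongrightarrow> 0))"
proof -
  note wg = assms(1)
  obtain C where C: "\<And>x. (1 / m x) * infsum (b x) UNIV \<le> C"
    using assms(3) unfolding bounded_degree_def by blast
  have my: "\<And>x. m x > 0" using wg_facts(1)[OF wg] .
  have deg: "infsum (b x) UNIV \<le> C * m x" for x
  proof -
    have "(1/m x) * infsum (b x) UNIV \<le> C" by (rule C)
    then show "infsum (b x) UNIV \<le> C * m x" using my[of x] by (simp add: field_simps)
  qed
  have C0: "C \<ge> 0"
  proof -
    obtain x0 :: 'a where True by blast
    have "0 \<le> (1 / m x0) * infsum (b x0) UNIV"
      using my[of x0] wg_facts(3)[OF wg] by (simp add: infsum_nonneg)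
    then show ?thesis using C[of x0] by linarith
  qed
  have "\<forall>n::nat. \<exists>p. \<forall>y\<in>D. real n + 1 < real (d_comb b y p)"
  proof
    fix n :: nat
    have pos: "real n + 1 > 0" by simp
    have "(\<Union>x\<in>D. {y. real (d_comb b x y) \<le> real n + 1}) \<noteq> UNIV"
      using assms(5) pos unfolding rel_dense_def by blast
    then obtain p where "p \<notin> (\<Union>x\<in>D. {y. real (d_comb b x y) \<le> real n + 1})" by blast
    then show "\<exists>p. \<forall>y\<in>D. real n + 1 < real (d_comb b y p)" by (auto simp: not_le)
  qed
  then obtain xs where xs: "\<forall>n. \<forall>y\<in>D. real n + 1 < real (d_comb b y (xs n))" by metis
  have van: "(laplacian b m ^^ k) (delta m (xs n)) y = 0" if y: "y \<in> D" and k: "\<not> n < k" for n k y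
  proof (rule ccontr)
    assume "(laplacian b m ^^ k) (delta m (xs n)) y \<noteq> 0"
    then obtain j where j: "j \<le> k" "(edge b ^^ j) y (xs n)" using locality[OF wg] by blast
    have "d_comb b y (xs n) \<le> j" unfolding d_comb_def using j(2) by (rule Least_le)
    then have "real (d_comb b y (xs n)) \<le> real n" using j(1) k by simp
    moreover have "real n + 1 < real (d_comb b y (xs n))" using xs y by blast
    ultimately show False by linarith
  qed
  have summ: "(\<lambda>y. m y * (semigroup b m t (delta m x) y)^2) summable_on D" for t x
  proof -
    show ?thesis
    proof (rule infsum_le_of_finite(1))
      fix y show "0 \<le> m y * (semigroup b m t (delta m x) y)^2" using my[of y] by simp
    next
      fix F :: "'a set" assume F: "finite F" "F \<subseteq> D"
      show "(\<Sum>y\<in>F. m y * (semigroup b m t (delta m x) y)^2) \<le> (suminf (\<lambda>k. if True then (2*C*\<bar>t\<bar>)^k / fact k else 0))^2"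
        using sg_bounds(5)[where b=b and m=m and C=C and t=t and T="\<bar>t\<bar>" and A=D and Q="\<lambda>_. True" and x=x and F=F] wg C0 deg F
        by simp
    qed
  qed
  have meas: "(\<lambda>t. ereal \<bar>l2_norm_on m D (semigroup b m t (delta m x))\<bar>) \<in> borel_measurable (restrict_space lborel {0<..<T})" for x T
  proof -
    have inf[measurable]: "(\<lambda>t. infsum (\<lambda>y. m y * (semigroup b m t (delta m x) y)^2) D) \<in> borel_measurable lborel"
      by (rule measurable_infsum_countable[OF _ summ]) measurable
    have "(\<lambda>t. ereal \<bar>l2_norm_on m D (semigroup b m t (delta m x))\<bar>) \<in> borel_measurable lborel"
      unfolding l2_norm_on_def by measurable
    then show ?thesis by (rule measurable_restrict_space1)
  qed
  have l2nn: "l2_norm_on m D f \<ge> 0" for f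
    unfolding l2_norm_on_def using my[THEN less_imp_le] by (simp add: infsum_nonneg)
  show ?thesis
  proof (intro exI[of _ xs] allI impI)
    fix T :: real and r :: ereal assume T: "T > 0" and r: "1 \<le> r"
    define E where "E n = suminf (\<lambda>k. if n < k then (2*C*T)^k / fact k else 0)" for n
    have E0: "E n \<ge> 0" for n
      unfolding E_def using sg_bounds(2)[where Q="\<lambda>k. n < k" and A="{}" and t=0 and T=T, OF wg C0 deg] T by simp
    have l2b: "l2_norm_on m D (semigroup b m t (delta m (xs n))) \<le> E n" if t: "t \<in> {0<..<T}" for t n
    proof -
      have tT: "\<bar>t\<bar> \<le> T" using t by auto
      have vn: "\<And>y k. y \<in> D \<Longrightarrow> \<not> n < k \<Longrightarrow> (laplacian b m ^^ k) (delta m (xs n)) y = 0"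
        using van by blast
      have "infsum (\<lambda>y. m y * (semigroup b m t (delta m (xs n)) y)^2) D \<le> (E n)^2"
      proof (rule infsum_le_of_finite(2))
        fix y show "0 \<le> m y * (semigroup b m t (delta m (xs n)) y)^2" using my[of y] by simp
      next
        fix F :: "'a set" assume F: "finite F" "F \<subseteq> D"
        show "(\<Sum>y\<in>F. m y * (semigroup b m t (delta m (xs n)) y)^2) \<le> (E n)^2"
          unfolding E_def
          by (rule sg_bounds(5)[where b=b and m=m and C=C and t=t and T=T and A=D and Q="\<lambda>k. n < k" and x="xs n" and F=F])
             (simp_all add: wg C0 deg tT vn F)
      qed
      then have "l2_norm_on m D (semigroup b m t (delta m (xs n))) \<le> sqrt ((E n)^2)"
        unfolding l2_norm_on_def by (rule real_sqrt_le_mono)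
      then show ?thesis using E0[of n] by simp
    qed
    have bnd: "0 \<le> Lr_norm r T (\<lambda>t. l2_norm_on m D (semigroup b m t (delta m (xs n)))) \<and>
        Lr_norm r T (\<lambda>t. l2_norm_on m D (semigroup b m t (delta m (xs n)))) \<le> ereal (E n * (1 + T))" for n
      by (rule Lr_bound[OF T r l2nn l2b E0 meas])
    have "summable (\<lambda>k. (2*C*T)^k / fact k)"
      using summable_exp[of "2*C*T"] by (simp add: divide_inverse mult.commute)
    then have Et: "E \<longlonglongrightarrow> 0" unfolding E_def by (rule tail_tendsto)
    have "(\<lambda>n. ereal (E n * (1 + T))) \<longlonglongrightarrow> ereal (0 * (1 + T))"
      by (intro tendsto_ereal tendsto_mult Et tendsto_const)
    then have up: "(\<lambda>n. ereal (E n * (1 + T))) \<longlonglongrightarrow> 0" by (simp add: zero_ereal_def)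
    show "(\<lambda>n. Lr_norm r T (\<lambda>t. l2_norm_on m D (semigroup b m t (delta m (xs n))))) \<longlonglongrightarrow> 0"
      by (rule tendsto_sandwich[OF _ _ tendsto_const up]) (use bnd in auto)
  qed
qed

end
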